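(* Let $n\ge 2$ and let $G=(V,E)$ be a $k$-edge-connected graph on $n$ vertices with $k\ge 7\log_2 n$. Then there is a set $S\subseteq V$ with $|S|\ge 2$ such that the induced subgraph $G[S]$ is $k/20$-edge-connected, $1/4$-dense in $G$, and satisfies $\phi(G[S])\ge 1/k$.
   Context: Graphs are finite, undirected, unweighted, loopless, possibly with parallel edges; $k$-edge-connected means every cut $(S,\overline S)$, $\emptyset\ne S\subsetneq V$, has at least $k$ edges. For a graph $H$ and $S\subseteq V(H)$, $\partial_H(S)$ is the number of edges of $H$ leaving $S$, $d_H(S)$ is the sum of $H$-degrees of vertices in $S$, and $\phi(H)=\min_{\emptyset\ne S\subsetneq V(H)}\partial_H(S)/\min\{d_H(S),d_H(V(H)\setminus S)\}$. An induced subgraph $H$ of $G$ is $\lambda$-dense if $d_H(v)\ge\lambda\, d_G(v)$ for every vertex $v$ of $H$. *)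

theory Defs
  imports Complex_Main
begin

text \<open>A finite loopless multigraph is a finite vertex set V together with a symmetric
edge-multiplicity function m (m u v = number of parallel edges between u and v),
vanishing on the diagonal and outside V.\<close>

definition multigraph :: "'a set \<Rightarrow> ('a \<Rightarrow> 'a \<Rightarrow> nat) \<Rightarrow> bool" where
  "multigraph V m \<longleftrightarrow> finite V \<and> (\<forall>u v. m u v = m v u) \<and> (\<forall>v. m v v = 0)
     \<and> (\<forall>u v. m u v \<noteq> 0 \<longrightarrow> u \<in> V \<and> v \<in> V)"

definition deg :: "'a set \<Rightarrow> ('a \<Rightarrow> 'a \<Rightarrow> nat) \<Rightarrow> 'a \<Rightarrow> nat" where
  "deg V m v = (\<Sum>u\<in>V. m v u)"

definition cut :: "'a set \<Rightarrow> ('a \<Rightarrow> 'a \<Rightarrow> nat) \<Rightarrow> 'a set \<Rightarrow> nat" where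
  "cut V m S = (\<Sum>u\<in>S. \<Sum>w\<in>V - S. m u w)"

definition vol :: "'a set \<Rightarrow> ('a \<Rightarrow> 'a \<Rightarrow> nat) \<Rightarrow> 'a set \<Rightarrow> nat" where
  "vol V m S = (\<Sum>v\<in>S. deg V m v)"

definition edge_connected :: "'a set \<Rightarrow> ('a \<Rightarrow> 'a \<Rightarrow> nat) \<Rightarrow> real \<Rightarrow> bool" where
  "edge_connected V m k \<longleftrightarrow> (\<forall>S. S \<noteq> {} \<and> S \<subset> V \<longrightarrow> real (cut V m S) \<ge> k)"

definition conductance :: "'a set \<Rightarrow> ('a \<Rightarrow> 'a \<Rightarrow> nat) \<Rightarrow> real" where
  "conductance V m = Min {real (cut V m S) / min (real (vol V m S)) (real (vol V m (V - S))) | S.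
      S \<noteq> {} \<and> S \<subset> V}"

definition induced :: "('a \<Rightarrow> 'a \<Rightarrow> nat) \<Rightarrow> 'a set \<Rightarrow> ('a \<Rightarrow> 'a \<Rightarrow> nat)" where
  "induced m S = (\<lambda>u v. if u \<in> S \<and> v \<in> S then m u v else 0)"

definition dense_in :: "'a set \<Rightarrow> ('a \<Rightarrow> 'a \<Rightarrow> nat) \<Rightarrow> 'a set \<Rightarrow> real \<Rightarrow> bool" where
  "dense_in V m S lam \<longleftrightarrow> (\<forall>v\<in>S. real (deg S (induced m S) v) \<ge> lam * real (deg V m v))"

end

theory Submission
  imports Defs
begin

definition cc :: "('a \<Rightarrow> 'a \<Rightarrow> nat) \<Rightarrow> 'a set \<Rightarrow> 'a set \<Rightarrow> nat" where
  "cc m A B = (\<Sum>u\<in>A. \<Sum>w\<in>B. m u w)"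

lemma cc_sym: assumes "multigraph V m" shows "cc m A B = cc m B A"
proof -
  have "cc m A B = (\<Sum>w\<in>B. \<Sum>u\<in>A. m u w)" unfolding cc_def by (rule sum.swap)
  also have "\<dots> = cc m B A" unfolding cc_def using assms by (simp add: multigraph_def)
  finally show ?thesis .
qed

lemma cc_union2: assumes "finite B" "finite C" "B \<inter> C = {}"
  shows "cc m A (B \<union> C) = cc m A B + cc m A C"
  unfolding cc_def using assms by (simp add: sum.union_disjoint sum.distrib)

lemma cc_union1: assumes "finite B" "finite C" "B \<inter> C = {}"
  shows "cc m (B \<union> C) A = cc m B A + cc m C A"
  unfolding cc_def using assms by (simp add: sum.union_disjoint)

lemma cut_split:
  assumes "finite V" "A \<inter> B = {}" "A \<union> B \<subseteq> V" "multigraph V m"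
  shows "cut V m A + cut V m B = cut V m (A \<union> B) + 2 * cc m A B"
proof -
  have fA: "finite A" "finite B" "finite (V - (A \<union> B))" using assms finite_subset by auto
  have e1: "V - A = B \<union> (V - (A \<union> B))" using assms by auto
  have e2: "V - B = A \<union> (V - (A \<union> B))" using assms by auto
  have "cut V m A = cc m A B + cc m A (V - (A \<union> B))"
    unfolding cut_def cc_def[symmetric] e1 by (rule cc_union2) (use fA in auto)
  moreover have "cut V m B = cc m B A + cc m B (V - (A \<union> B))"
    unfolding cut_def cc_def[symmetric] e2 by (rule cc_union2) (use fA in auto)
  moreover have "cut V m (A \<union> B) = cc m A (V - (A \<union> B)) + cc m B (V - (A \<union> B))"
    unfolding cut_def cc_def[symmetric] by (rule cc_union1) (use fA assms in auto)
  moreover have "cc m B A = cc m A B" using cc_sym[OF assms(4)] by simp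
  ultimately show ?thesis by simp
qed

lemma vol_split: assumes "finite A" "finite B" "A \<inter> B = {}"
  shows "vol V m (A \<union> B) = vol V m A + vol V m B"
  unfolding vol_def using assms by (simp add: sum.union_disjoint)

lemma cut_single: assumes "multigraph V m" "v \<in> V"
  shows "cut V m {v} = deg V m v"
proof -
  have "deg V m v = m v v + (\<Sum>u\<in>V-{v}. m v u)" unfolding deg_def
    using assms by (simp add: multigraph_def sum.remove)
  then show ?thesis using assms unfolding cut_def by (simp add: multigraph_def)
qed

lemma deg_ge: assumes "multigraph V m" "v \<in> V" "card V \<ge> 2" "edge_connected V m k"
  shows "real (deg V m v) \<ge> k"
proof -
  have "V \<noteq> {v}" using assms(3) by auto
  then have "{v} \<subset> V" using assms(2) by blast
  then have "real (cut V m {v}) \<ge> k" using assms(4) unfolding edge_connected_def by blast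
  then show ?thesis using cut_single[OF assms(1,2)] by simp
qed

lemma cut_induced: assumes "T \<subseteq> S" shows "cut S (induced m S) T = cc m T (S - T)"
  unfolding cut_def cc_def induced_def using assms by (intro sum.cong) auto

lemma deg_induced: assumes "v \<in> S" shows "deg S (induced m S) v = (\<Sum>u\<in>S. m v u)"
  unfolding deg_def induced_def using assms by (intro sum.cong) auto

lemma vol_induced_le: assumes "T \<subseteq> S" "S \<subseteq> V" "finite V"
  shows "vol S (induced m S) T \<le> vol V m T"
  unfolding vol_def
proof (rule sum_mono)
  fix v assume "v \<in> T"
  then have "v \<in> S" using assms(1) by blast
  then have "deg S (induced m S) v = (\<Sum>u\<in>S. m v u)" by (rule deg_induced)
  also have "\<dots> \<le> deg V m v" unfolding deg_def using assms by (intro sum_mono2) auto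
  finally show "deg S (induced m S) v \<le> deg V m v" .
qed

lemma vol_induced_ge: assumes "T \<subseteq> S" "finite S"
  shows "cc m T (S - T) \<le> vol S (induced m S) T"
  unfolding vol_def cc_def
proof (rule sum_mono)
  fix v assume "v \<in> T"
  then have "v \<in> S" using assms(1) by blast
  then have "deg S (induced m S) v = (\<Sum>u\<in>S. m v u)" by (rule deg_induced)
  moreover have "(\<Sum>u\<in>S-T. m v u) \<le> (\<Sum>u\<in>S. m v u)" using assms by (intro sum_mono2) auto
  ultimately show "(\<Sum>u\<in>S-T. m v u) \<le> deg S (induced m S) v" by simp
qed

lemma arith_split:
  fixes cA cB cS c \<kappa> vA vB vS lA lB lS K :: real
  assumes h: "cS - \<kappa> + K * vS * lS \<le> cA - \<kappa> + K * vA * lA + (cB - \<kappa> + K * vB * lB)"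
    and "cA + cB = cS + 2 * c" "vS = vA + vB" "lS \<ge> 1 + lA" "lS \<ge> lB" "vA \<ge> 0" "vB \<ge> 0" "K \<ge> 0"
  shows "2 * c \<ge> \<kappa> + K * vA"
proof -
  have "K * vA \<ge> 0" "K * vB \<ge> 0" using assms by auto
  then have p1: "K * vA * lA \<le> K * vA * (lS - 1)" and p2: "K * vB * lB \<le> K * vB * lS"
    using assms by (auto intro: mult_left_mono)
  have "K * vS * lS = K * vA * (lS - 1) + K * vB * lS + K * vA" using assms(3) by (simp add: algebra_simps)
  then show ?thesis using h p1 p2 assms(2) by linarith
qed

lemma arith_dense:
  fixes cB cS c \<kappa> vB vS lB lS K d \<rho> :: real
  assumes h: "\<rho> * vB \<le> cB - \<kappa> + K * vB * lB"
    and "d + cB = cS + 2 * c" "cS - \<kappa> + K * vS * lS = \<rho> * vS" "vS = d + vB"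
    "lB \<le> lS" "lS \<ge> 0" "vB \<ge> 0" "d \<ge> 0" "K \<ge> 0" "\<rho> \<le> 2/7"
  shows "2 * c \<ge> 5/7 * d"
proof -
  have "K * vB \<ge> 0" using assms by auto
  then have p1: "K * vB * lB \<le> K * vB * lS" using assms by (auto intro: mult_left_mono)
  have p2: "K * d * lS \<ge> 0" using assms by auto
  have p3: "\<rho> * d \<le> 2/7 * d" using mult_right_mono[OF assms(10) assms(8)] by simp
  have e1: "K * vS * lS = K * d * lS + K * vB * lS" using assms(4) by (simp add: algebra_simps)
  have e2: "\<rho> * vS = \<rho> * d + \<rho> * vB" using assms(4) by (simp add: algebra_simps)
  show ?thesis using h p1 p2 p3 e1 e2 assms(2,3) by linarith
qed

lemma arith_cut:
  fixes k c \<kappa> v vS M :: real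
  assumes "k > 0" "\<kappa> \<ge> 0" "2 * c \<ge> \<kappa> + 2 / k * v" "v \<ge> 0" "vS \<le> v" "M \<le> vS"
  shows "2 * c \<ge> \<kappa> \<and> k * c \<ge> M"
proof -
  have "2 / k * v \<ge> 0" using assms by auto
  have "k * (2 * c) \<ge> k * (\<kappa> + 2 / k * v)" using assms by (intro mult_left_mono) auto
  also have "k * (\<kappa> + 2 / k * v) = k * \<kappa> + 2 * v" using assms(1) by (simp add: algebra_simps)
  finally have "k * (2 * c) \<ge> k * \<kappa> + 2 * v" .
  moreover have "k * \<kappa> \<ge> 0" using assms by auto
  ultimately have "k * c \<ge> v" by (simp add: algebra_simps)
  moreover have "2 * c \<ge> \<kappa>" using assms(3) \<open>2 / k * v \<ge> 0\<close> by linarith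
  ultimately show ?thesis using assms(5,6) by linarith
qed
lemma log2_split: assumes "2 * a \<le> s" "a \<ge> 1"
  shows "log 2 (real s) \<ge> 1 + log 2 (real a)"
proof -
  have "log 2 (real s) \<ge> log 2 (2 * real a)" using assms by simp
  moreover have "log 2 (2 * real a) = 1 + log 2 (real a)" using assms by (simp add: log_mult)
  ultimately show ?thesis by simp
qed

theorem mainTheorem9:
  fixes V :: "'a set" and m :: "'a \<Rightarrow> 'a \<Rightarrow> nat" and k :: nat
  assumes "multigraph V m"
    and "card V \<ge> 2"
    and "edge_connected V m (real k)"
    and "real k \<ge> 7 * log 2 (real (card V))"
  shows "\<exists>S\<subseteq>V. card S \<ge> 2
           \<and> edge_connected S (induced m S) (real k / 20)
           \<and> dense_in V m S (1/4)
           \<and> conductance S (induced m S) \<ge> 1 / real k"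
proof -
  have mg: "multigraph V m" by fact
  have fin: "finite V" using assms(1) by (simp add: multigraph_def)
  have mvv: "\<And>v. m v v = 0" using assms(1) by (simp add: multigraph_def)
  have lgn: "log 2 (real (card V)) \<ge> 1" using assms(2) by simp
  have k7: "real k \<ge> 7" using assms(4) lgn by linarith
  have kpos: "real k > 0" using k7 by linarith
  define \<kappa> where "\<kappa> = real k / 10"
  define f where "f X = real (cut V m X) - \<kappa> + 2 / real k * real (vol V m X) * log 2 (real (card X))" for X
  define \<rho> where "\<rho> X = f X / real (vol V m X)" for X
  define F where "F = {X. X \<subseteq> V \<and> X \<noteq> {}}"
  have degk: "\<And>v. v \<in> V \<Longrightarrow> real (deg V m v) \<ge> real k"
    by (rule deg_ge[OF assms(1) _ assms(2,3)])
  have volpos: "real (vol V m X) \<ge> real k" if "X \<in> F" for X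
  proof -
    have XV: "X \<subseteq> V \<and> X \<noteq> {}" using that unfolding F_def by (rule CollectD)
    obtain x where x: "x \<in> X" using XV by blast
    have fX: "finite X" using XV fin finite_subset by blast
    have "deg V m x \<le> vol V m X" unfolding vol_def using fX by (intro member_le_sum[OF x]) auto
    moreover have "x \<in> V" using x XV by blast
    ultimately show ?thesis using degk[of x] by simp
  qed
  have finF: "finite F" unfolding F_def using fin by auto
  have neF: "F \<noteq> {}" unfolding F_def using assms(2) by auto
  obtain S where SF: "S \<in> F" and Smin: "\<And>X. X \<in> F \<Longrightarrow> \<rho> S \<le> \<rho> X"
    using ex_is_arg_min_if_finite[OF finF neF, of \<rho>] unfolding is_arg_min_def by (meson not_less)
  have SV: "S \<subseteq> V" and Sne: "S \<noteq> {}" using SF unfolding F_def by auto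
  have finS: "finite S" using SV fin finite_subset by auto
  have fge: "f X \<ge> \<rho> S * real (vol V m X)" if "X \<in> F" for X
  proof -
    have "\<rho> S \<le> f X / real (vol V m X)" using Smin[OF that] \<rho>_def by simp
    then show ?thesis using volpos[OF that] kpos by (simp add: pos_le_divide_eq)
  qed
  have fS: "f S = \<rho> S * real (vol V m S)" using volpos[OF SF] kpos \<rho>_def by simp
  have VF: "V \<in> F" unfolding F_def using assms(2) by auto
  have rho27: "\<rho> S \<le> 2/7"
  proof -
    have c0: "cut V m V = 0" unfolding cut_def by simp
    have "f V \<le> 2 / real k * real (vol V m V) * (real k / 7)"
    proof -
      have "2 / real k * real (vol V m V) \<ge> 0" using kpos by simp
      then have "2 / real k * real (vol V m V) * log 2 (real (card V)) \<le> 2 / real k * real (vol V m V) * (real k / 7)"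
        using assms(4) by (intro mult_left_mono) auto
      then show ?thesis unfolding f_def c0 \<kappa>_def using kpos by simp
    qed
    also have "\<dots> = 2/7 * real (vol V m V)" using kpos by simp
    finally have "\<rho> V \<le> 2/7" unfolding \<rho>_def using volpos[OF VF] kpos by (simp add: pos_divide_le_eq)
    then show ?thesis using Smin[OF VF] by simp
  qed
  have split: "2 * real (cc m A B) \<ge> \<kappa> + 2 / real k * real (vol V m A)"
    if AB: "A \<inter> B = {}" "A \<union> B = S" "A \<noteq> {}" "B \<noteq> {}" "card A \<le> card B" for A B
  proof -
    have AF: "A \<in> F" and BF: "B \<in> F" using AB SV unfolding F_def by auto
    have fA: "finite A" "finite B" using AB finS finite_subset by auto
    have cA: "card A \<ge> 1" "card B \<ge> 1" using fA AB by (auto simp: Suc_le_eq card_gt_0_iff)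
    have cS: "card S = card A + card B" using AB fA card_Un_disjoint by metis
    have ABV: "A \<union> B \<subseteq> V" using AB SV by simp
    have cs0: "cut V m A + cut V m B = cut V m S + 2 * cc m A B"
      using cut_split[OF fin AB(1) ABV mg] unfolding AB(2) .
    have cs: "real (cut V m A) + real (cut V m B) = real (cut V m S) + 2 * real (cc m A B)"
      using arg_cong[OF cs0, of real] by simp
    have vs: "real (vol V m S) = real (vol V m A) + real (vol V m B)"
      using vol_split[OF fA AB(1), of V m] AB by simp
    have lA: "log 2 (real (card S)) \<ge> 1 + log 2 (real (card A))"
      using log2_split[of "card A" "card S"] cS cA AB by simp
    have lB: "log 2 (real (card S)) \<ge> log 2 (real (card B))"
      using cS cA by simp
    have e: "f S = \<rho> S * real (vol V m A) + \<rho> S * real (vol V m B)" using fS vs by (simp add: distrib_left)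
    have fAB: "f S \<le> f A + f B" using fge[OF AF] fge[OF BF] e by linarith
    show ?thesis
      by (rule arith_split[OF fAB[unfolded f_def] cs vs lA lB]) (use kpos in auto)
  qed
  have cardS: "card S \<ge> 2"
  proof (rule ccontr)
    assume "\<not> card S \<ge> 2"
    moreover have "card S > 0" using Sne finS by auto
    ultimately have "card S = 1" by linarith
    then obtain v where Sv: "S = {v}" by (rule card_1_singletonE)
    have vV: "v \<in> V" using Sv SV by auto
    have "vol V m {v} = deg V m v" unfolding vol_def by simp
    then have fv: "f S = real (deg V m v) - \<kappa>" unfolding f_def Sv using cut_single[OF mg vV] by simp
    have "real (deg V m v) > 0" using degk[OF vV] kpos by linarith
    have "\<rho> S = (real (deg V m v) - \<kappa>) / real (deg V m v)"
      unfolding \<rho>_def fv using \<open>vol V m {v} = deg V m v\<close> Sv by simp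
    moreover have "(real (deg V m v) - \<kappa>) / real (deg V m v) \<ge> 9/10"
      using degk[OF vV] kpos \<open>real (deg V m v) > 0\<close> unfolding \<kappa>_def by (simp add: pos_le_divide_eq)
    ultimately show False using rho27 by simp
  qed
  have dense: "dense_in V m S (1/4)"
    unfolding dense_in_def
  proof
    fix v assume vS: "v \<in> S"
    have vV: "v \<in> V" using vS SV by auto
    define B where "B = S - {v}"
    have "S \<noteq> {v}" using cardS by auto
    then have Bne: "B \<noteq> {}" using vS unfolding B_def by blast
    have BF: "B \<in> F" using Bne SV unfolding B_def F_def by auto
    have fB: "finite B" using B_def finS by auto
    have SvB: "S = {v} \<union> B" and dj: "{v} \<inter> B = {}" using vS B_def by auto
    have ABV: "{v} \<union> B \<subseteq> V" using SvB SV by simp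
    have cs0: "cut V m {v} + cut V m B = cut V m S + 2 * cc m {v} B"
      using cut_split[OF fin dj ABV mg] unfolding SvB[symmetric] .
    have cv: "cut V m {v} = deg V m v" using cut_single[OF mg vV] .
    have cs: "real (deg V m v) + real (cut V m B) = real (cut V m S) + 2 * real (cc m {v} B)"
      using arg_cong[OF cs0, of real] cv by simp
    have vs: "real (vol V m S) = real (deg V m v) + real (vol V m B)"
      using vol_split[OF _ fB dj, of V m] SvB by (simp add: vol_def)
    have ccd: "cc m {v} B = deg S (induced m S) v"
    proof -
      have "deg S (induced m S) v = (\<Sum>u\<in>S. m v u)" using deg_induced[OF vS] .
      also have "\<dots> = m v v + (\<Sum>u\<in>B. m v u)" unfolding B_def using finS vS by (simp add: sum.remove)
      finally show ?thesis unfolding cc_def using mvv by simp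
    qed
    have cSB: "card B \<le> card S" using B_def finS by (simp add: card_mono)
    have cB1: "card B \<ge> 1" using fB Bne by (simp add: Suc_le_eq card_gt_0_iff)
    have lB: "log 2 (real (card B)) \<le> log 2 (real (card S))" using cSB cB1 by simp
    have lS0: "log 2 (real (card S)) \<ge> 0" using cardS by simp
    have fB': "\<rho> S * real (vol V m B) \<le> f B" using fge[OF BF] .
    have "2 * real (cc m {v} B) \<ge> 5/7 * real (deg V m v)"
      by (rule arith_dense[OF fB'[unfolded f_def] cs fS[unfolded f_def] vs lB lS0 _ _ _ rho27])
        (use kpos in auto)
    then show "real (deg S (induced m S) v) \<ge> 1/4 * real (deg V m v)" using ccd by simp
  qed
  have cutT: "2 * real (cc m T (S - T)) \<ge> \<kappa> \<and> real k * real (cc m T (S - T)) \<ge> min (real (vol S (induced m S) T)) (real (vol S (induced m S) (S - T)))"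
    if T: "T \<noteq> {}" "T \<subset> S" for T
  proof -
    have fT: "finite T" "finite (S - T)" using T finS finite_subset by auto
    have ccs: "cc m (S - T) T = cc m T (S - T)" using cc_sym[OF mg] by simp
    have v1: "real (vol S (induced m S) T) \<le> real (vol V m T)" using vol_induced_le[of T S V m] T SV fin by simp
    have v2: "real (vol S (induced m S) (S - T)) \<le> real (vol V m (S - T))" using vol_induced_le[of "S - T" S V m] T SV fin by simp
    have kap: "\<kappa> \<ge> 0" unfolding \<kappa>_def by simp
    show ?thesis
    proof (cases "card T \<le> card (S - T)")
      case True
      have h: "2 * real (cc m T (S - T)) \<ge> \<kappa> + 2 / real k * real (vol V m T)"
        using split[of T "S - T"] T True by auto
      show ?thesis by (rule arith_cut[OF kpos kap h _ v1]) auto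
    next
      case False
      have "2 * real (cc m (S - T) T) \<ge> \<kappa> + 2 / real k * real (vol V m (S - T))"
        using split[of "S - T" T] T False by auto
      then have h: "2 * real (cc m T (S - T)) \<ge> \<kappa> + 2 / real k * real (vol V m (S - T))" using ccs by simp
      show ?thesis by (rule arith_cut[OF kpos kap h _ v2]) auto
    qed
  qed
  have econn: "edge_connected S (induced m S) (real k / 20)"
    unfolding edge_connected_def
  proof (intro allI impI)
    fix T assume T: "T \<noteq> {} \<and> T \<subset> S"
    then show "real (cut S (induced m S) T) \<ge> real k / 20"
      using cutT[of T] cut_induced[of T S m] \<kappa>_def by auto
  qed
  have cond: "conductance S (induced m S) \<ge> 1 / real k"
  proof -
    define g where "g T = real (cut S (induced m S) T) / min (real (vol S (induced m S) T)) (real (vol S (induced m S) (S - T)))" for T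
    have eq: "conductance S (induced m S) = Min (g ` {T. T \<noteq> {} \<and> T \<subset> S})"
      unfolding conductance_def g_def by (simp add: setcompr_eq_image)
    have fin2: "finite {T. T \<noteq> {} \<and> T \<subset> S}" by (rule finite_subset[of _ "Pow S"]) (use finS in auto)
    obtain x where xS: "x \<in> S" using Sne by auto
    have "S \<noteq> {x}" using cardS by auto
    then have "{x} \<subset> S" using xS by blast
    then have ne2: "{T. T \<noteq> {} \<and> T \<subset> S} \<noteq> {}" by blast
    have "\<forall>T\<in>{T. T \<noteq> {} \<and> T \<subset> S}. 1 / real k \<le> g T"
    proof
      fix T assume "T \<in> {T. T \<noteq> {} \<and> T \<subset> S}"
      then have T: "T \<noteq> {}" "T \<subset> S" by auto
      have fT: "finite T" using T finS finite_subset by auto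
      have ci: "cut S (induced m S) T = cc m T (S - T)" using cut_induced[of T S m] T by auto
      have c1: "cc m T (S - T) \<le> vol S (induced m S) T" using vol_induced_ge[of T S m] T finS by auto
      have c2: "cc m (S - T) (S - (S - T)) \<le> vol S (induced m S) (S - T)" using vol_induced_ge[of "S - T" S m] finS by auto
      have "S - (S - T) = T" using T by auto
      then have c2': "cc m T (S - T) \<le> vol S (induced m S) (S - T)" using c2 cc_sym[OF mg] by metis
      define M where "M = min (real (vol S (induced m S) T)) (real (vol S (induced m S) (S - T)))"
      define c where "c = real (cc m T (S - T))"
      have cpos: "c > 0" using cutT[OF T] \<kappa>_def kpos c_def by simp
      have Mpos: "M > 0" using c1 c2' cpos unfolding M_def c_def by linarith
      have Mle: "M \<le> real k * c" using cutT[OF T] unfolding M_def c_def by simp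
      have "g T = c / M" unfolding g_def M_def c_def ci by (rule refl)
      moreover have "1 / real k \<le> c / M" using Mpos kpos Mle
        by (simp add: divide_simps mult.commute)
      ultimately show "1 / real k \<le> g T" by simp
    qed
    then show ?thesis unfolding eq using fin2 ne2 by simp
  qed
  show ?thesis using SV cardS econn dense cond by blast
qed

end
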